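(* Let $(S,m)$, $\phi:S'\to S''$ be as in the context, and let $k$, $\overline{S}$, $\psi_i$ be as constructed there. Then for all $i,j\in\mathbb{Z}/k$ and $s,t,s',t'\in S$ with $s\neq t$, $\psi_i(s)=\psi_j(s')$ and $\psi_i(t)=\psi_j(t')$, we have $s'\ne t'$ and $m(s,t)=m(s',t')$. Consequently the function $\overline{m}$ on 2-element subsets $\{x,y\}$ of $\overline{S}$ given by $\overline{m}(x,y)=m(s,t)$ if $x=\psi_i(s)$, $y=\psi_i(t)$ for some $i\in\mathbb{Z}/k$ and $s,t\in S$, and $\overline{m}(x,y)=\infty$ otherwise, is well defined.
   Context: $(S,m)$ is an Artin system: a finite set $S$ with a function $m$ from 2-element subsets of $S$ to $\{2,3,\dots\}\cup\{\infty\}$. $\phi:S'\to S''$ is a bijection between subsets of $S$ with $m(s,s')=m(\phi(s),\phi(s'))$ for all distinct $s,s'\in S'$. Let $\Lambda$ be the directed graph with vertex set $S$ and an edge $(s,\phi(s))$ for each $s\in S'$; it is a disjoint union of directed cycles and directed (non-closed) paths. Choose an integer $k$ that is a multiple of the length (number of edges) of each cycle in $\Lambda$ and strictly greater than twice the length of each path in $\Lambda$. Let $\overline{S}$ be the quotient of $\mathbb{Z}/k\times S$ by the equivalence relation generated by $(i,s)\sim(i+1,\phi(s))$ for $i\in\mathbb{Z}/k$, $s\in S'$, and let $\psi_i:S\to\overline{S}$ send $s$ to the class of $(i,s)$. *)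

theory Defs
  imports Main "HOL-Library.Extended_Nat"
begin

text \<open>The graph Lambda has vertex set S and an edge (s, phi s) for each s in S'.
  A walk of n edges starting at s exists iff the first n iterates lie in S'.\<close>
definition walk :: "('a \<Rightarrow> 'a) \<Rightarrow> 'a set \<Rightarrow> 'a \<Rightarrow> nat \<Rightarrow> bool" where
  "walk \<phi> S' s n \<longleftrightarrow> (\<forall>i<n. (\<phi> ^^ i) s \<in> S')"

definition cycle_len :: "('a \<Rightarrow> 'a) \<Rightarrow> 'a set \<Rightarrow> 'a \<Rightarrow> nat \<Rightarrow> bool" where
  "cycle_len \<phi> S' s n \<longleftrightarrow> n \<ge> 1 \<and> walk \<phi> S' s n \<and> (\<phi> ^^ n) s = s
      \<and> (\<forall>j. 1 \<le> j \<and> j < n \<longrightarrow> (\<phi> ^^ j) s \<noteq> s)"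

text \<open>A maximal directed (non-closed) path component of Lambda starting at s
  (s has no incoming edge) with n edges (its endpoint has no outgoing edge).\<close>
definition path_len :: "('a \<Rightarrow> 'a) \<Rightarrow> 'a set \<Rightarrow> 'a set \<Rightarrow> 'a \<Rightarrow> nat \<Rightarrow> bool" where
  "path_len \<phi> S' S'' s n \<longleftrightarrow> s \<notin> S'' \<and> walk \<phi> S' s n \<and> (\<phi> ^^ n) s \<notin> S'"

text \<open>Generating relation on Z/k x S (Z/k represented by {0..<k}):
  (i,s) ~ (i+1,phi s) for s in S'.\<close>
definition gen_rel :: "nat \<Rightarrow> ('a \<Rightarrow> 'a) \<Rightarrow> 'a set \<Rightarrow> ((nat \<times> 'a) \<times> (nat \<times> 'a)) set" where
  "gen_rel k \<phi> S' = {((i, s), ((i + 1) mod k, \<phi> s)) | i s. i < k \<and> s \<in> S'}"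

definition eqv :: "nat \<Rightarrow> ('a \<Rightarrow> 'a) \<Rightarrow> 'a set \<Rightarrow> ((nat \<times> 'a) \<times> (nat \<times> 'a)) set" where
  "eqv k \<phi> S' = (gen_rel k \<phi> S' \<union> (gen_rel k \<phi> S')\<inverse>)\<^sup>*"

definition Sbar :: "nat \<Rightarrow> ('a \<Rightarrow> 'a) \<Rightarrow> 'a set \<Rightarrow> 'a set \<Rightarrow> (nat \<times> 'a) set set" where
  "Sbar k \<phi> S S' = ({0..<k} \<times> S) // eqv k \<phi> S'"

definition psi :: "nat \<Rightarrow> ('a \<Rightarrow> 'a) \<Rightarrow> 'a set \<Rightarrow> nat \<Rightarrow> 'a \<Rightarrow> (nat \<times> 'a) set" where
  "psi k \<phi> S' i s = eqv k \<phi> S' `` {(i, s)}"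

end

theory Submission
  imports Defs
begin

lemma rtrancl_sym_sv:
  assumes sv: "single_valued R" and svc: "single_valued (R\<inverse>)"
  shows "(R \<union> R\<inverse>)\<^sup>* \<subseteq> R\<^sup>* \<union> (R\<^sup>*)\<inverse>"
proof
  fix p assume "p \<in> (R \<union> R\<inverse>)\<^sup>*"
  then obtain x z where p: "p = (x,z)" and xz: "(x,z) \<in> (R \<union> R\<inverse>)\<^sup>*" by (cases p) auto
  from xz have "(x,z) \<in> R\<^sup>* \<union> (R\<^sup>*)\<inverse>"
  proof (induction rule: rtrancl_induct)
    case base then show ?case by simp
  next
    case (step y z)
    from step.hyps(2) step.IH show ?case
    proof (elim UnE)
      assume "(y,z) \<in> R" "(x,y) \<in> R\<^sup>*" then show ?thesis by auto
    next
      assume yz: "(y,z) \<in> R\<inverse>" and xy: "(x,y) \<in> R\<^sup>*"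
      show ?thesis
      proof (cases "x = y")
        case True then show ?thesis using yz by auto
      next
        case False
        then obtain y' where "(x,y') \<in> R\<^sup>*" "(y',y) \<in> R" using xy by (metis rtranclE)
        moreover have "(z,y) \<in> R" using yz by auto
        ultimately have "y' = z" using svc by (auto simp: single_valued_def)
        then show ?thesis using \<open>(x,y') \<in> R\<^sup>*\<close> by auto
      qed
    next
      assume yz: "(y,z) \<in> R" and xy: "(x,y) \<in> (R\<^sup>*)\<inverse>"
      show ?thesis
      proof (cases "x = y")
        case True then show ?thesis using yz by auto
      next
        case False
        have "(y,x) \<in> R\<^sup>*" using xy by auto
        then obtain y' where "(y,y') \<in> R" "(y',x) \<in> R\<^sup>*" using False by (metis converse_rtranclE)
        then have "y' = z" using sv yz by (auto simp: single_valued_def)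
        then show ?thesis using \<open>(y',x) \<in> R\<^sup>*\<close> by auto
      qed
    next
      assume yz: "(y,z) \<in> R\<inverse>" and xy: "(x,y) \<in> (R\<^sup>*)\<inverse>"
      then have "(z,y) \<in> R" "(y,x) \<in> R\<^sup>*" by auto
      then have "(z,x) \<in> R\<^sup>*" by (rule converse_rtrancl_into_rtrancl)
      then show ?thesis by simp
    qed
  qed
  then show "p \<in> R\<^sup>* \<union> (R\<^sup>*)\<inverse>" using p by simp
qed

lemma walk_mono: "walk \<phi> S' x n \<Longrightarrow> a \<le> n \<Longrightarrow> walk \<phi> S' x a"
  by (auto simp: walk_def)

lemma walk_shift: "walk \<phi> S' x (c + n) \<Longrightarrow> walk \<phi> S' ((\<phi>^^c) x) n"
  unfolding walk_def
proof (intro allI impI)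
  fix i assume "\<forall>i<c + n. (\<phi> ^^ i) x \<in> S'" "i < n"
  then have "(\<phi> ^^ (i + c)) x \<in> S'" by auto
  then show "(\<phi> ^^ i) ((\<phi> ^^ c) x) \<in> S'" by (simp add: funpow_add)
qed

lemma walk_Suc: "walk \<phi> S' x (Suc n) \<longleftrightarrow> walk \<phi> S' x n \<and> (\<phi>^^n) x \<in> S'"
  by (auto simp: walk_def less_Suc_eq)

lemma mod_suc_inj: "(i::nat) < k \<Longrightarrow> i' < k \<Longrightarrow> (i+1) mod k = (i'+1) mod k \<Longrightarrow> i = i'"
proof -
  assume a: "i < k" "i' < k" "(i+1) mod k = (i'+1) mod k"
  have e: "\<And>j::nat. j < k \<Longrightarrow> (j+1) mod k = (if j + 1 = k then 0 else j+1)" by auto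
  show ?thesis using a e[of i] e[of i'] by (auto split: if_splits)
qed

lemma fwd_rel:
  assumes "((i,s),(j,u)) \<in> (gen_rel k \<phi> S')\<^sup>*" "i < k"
  shows "\<exists>a. walk \<phi> S' s a \<and> u = (\<phi>^^a) s \<and> j = (i+a) mod k"
  using assms(1)
proof (induction rule: rtrancl_induct2)
  case refl
  then show ?case using assms(2) by (intro exI[of _ 0]) (auto simp: walk_def)
next
  case (step j u j' u')
  then obtain a where a: "walk \<phi> S' s a" "u = (\<phi>^^a) s" "j = (i+a) mod k" by blast
  from step.hyps(2) have "u \<in> S'" "j' = (j+1) mod k" "u' = \<phi> u" by (auto simp: gen_rel_def)
  then show ?case using a
    by (intro exI[of _ "Suc a"]) (auto simp: walk_Suc mod_Suc_eq)
qed

lemma eqv_char: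
  assumes inj: "inj_on \<phi> S'" and rel: "((i,s),(j,u)) \<in> eqv k \<phi> S'" and ik: "i < k" and jk: "j < k"
  shows "(\<exists>a. walk \<phi> S' s a \<and> u = (\<phi>^^a) s \<and> j = (i+a) mod k)
       \<or> (\<exists>a. walk \<phi> S' u a \<and> s = (\<phi>^^a) u \<and> i = (j+a) mod k)"
proof -
  let ?R = "gen_rel k \<phi> S'"
  have sv: "single_valued ?R"
  proof (rule single_valuedI)
    fix x y z assume "(x,y) \<in> ?R" "(x,z) \<in> ?R"
    then obtain i1 s1 i2 s2 where e: "x = (i1,s1)" "y = ((i1+1) mod k, \<phi> s1)"
      "x = (i2,s2)" "z = ((i2+1) mod k, \<phi> s2)"
      unfolding gen_rel_def by blast
    then show "y = z" by simp
  qed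
  have svc: "single_valued (?R\<inverse>)"
  proof (rule single_valuedI)
    fix x y z assume "(x,y) \<in> ?R\<inverse>" "(x,z) \<in> ?R\<inverse>"
    then have "(y,x) \<in> ?R" "(z,x) \<in> ?R" by auto
    then obtain i1 s1 i2 s2 where e: "y = (i1,s1)" "x = ((i1+1) mod k, \<phi> s1)" "i1 < k" "s1 \<in> S'"
      "z = (i2,s2)" "x = ((i2+1) mod k, \<phi> s2)" "i2 < k" "s2 \<in> S'"
      unfolding gen_rel_def by blast
    then have "(i1+1) mod k = (i2+1) mod k" "\<phi> s1 = \<phi> s2" by auto
    then have "i1 = i2" "s1 = s2" using mod_suc_inj[OF e(3) e(7)] inj_onD[OF inj _ e(4) e(8)] by auto
    then show "y = z" using e by simp
  qed
  have "((i,s),(j,u)) \<in> (?R \<union> ?R\<inverse>)\<^sup>*" using rel by (simp only: eqv_def)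
  then have "((i,s),(j,u)) \<in> ?R\<^sup>* \<union> (?R\<^sup>*)\<inverse>"
    by (rule subsetD[OF rtrancl_sym_sv[OF sv svc]])
  then show ?thesis
  proof (rule UnE)
    assume "((i,s),(j,u)) \<in> ?R\<^sup>*"
    then show ?thesis by (rule disjI1[OF fwd_rel[OF _ ik]])
  next
    assume "((i,s),(j,u)) \<in> (?R\<^sup>*)\<inverse>"
    then have "((j,u),(i,s)) \<in> ?R\<^sup>*" by simp
    then show ?thesis by (rule disjI2[OF fwd_rel[OF _ jk]])
  qed
qed


locale lsetup =
  fixes S S' S'' :: "'a set" and m :: "'a set \<Rightarrow> enat" and \<phi> :: "'a \<Rightarrow> 'a" and k :: nat
  assumes finS: "finite S"
    and S'_sub: "S' \<subseteq> S" and S''_sub: "S'' \<subseteq> S"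
    and phi_bij: "bij_betw \<phi> S' S''"
    and phi_m: "\<forall>s\<in>S'. \<forall>t\<in>S'. s \<noteq> t \<longrightarrow> m {\<phi> s, \<phi> t} = m {s, t}"
    and k_pos: "k \<ge> 1"
    and k_cycles: "\<forall>s\<in>S. \<forall>n. cycle_len \<phi> S' s n \<longrightarrow> n dvd k"
    and k_paths: "\<forall>s\<in>S. \<forall>n. path_len \<phi> S' S'' s n \<longrightarrow> 2 * n < k"
begin

lemma inj: "inj_on \<phi> S'" using phi_bij by (simp add: bij_betw_def)

definition P where "P x \<longleftrightarrow> (\<phi>^^k) x = x \<and> (\<forall>N. walk \<phi> S' x N)"
definition fper where "fper x \<longleftrightarrow> (\<exists>d\<ge>1. (\<phi>^^d) x = x \<and> walk \<phi> S' x d)"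

lemma W:
  assumes "walk \<phi> S' s n" "walk \<phi> S' t n" "s \<noteq> t"
  shows "(\<phi>^^n) s \<noteq> (\<phi>^^n) t \<and> m {(\<phi>^^n) s, (\<phi>^^n) t} = m {s,t}"
  using assms
proof (induction n)
  case 0 then show ?case by simp
next
  case (Suc n)
  have w1: "walk \<phi> S' s n" "(\<phi>^^n) s \<in> S'" using Suc.prems(1) unfolding walk_Suc by blast+
  have w2: "walk \<phi> S' t n" "(\<phi>^^n) t \<in> S'" using Suc.prems(2) unfolding walk_Suc by blast+
  have IH: "(\<phi>^^n) s \<noteq> (\<phi>^^n) t" "m {(\<phi>^^n) s, (\<phi>^^n) t} = m {s,t}"
    using Suc.IH[OF w1(1) w2(1) Suc.prems(3)] by blast+
  have ne: "\<phi> ((\<phi>^^n) s) \<noteq> \<phi> ((\<phi>^^n) t)"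
  proof
    assume "\<phi> ((\<phi>^^n) s) = \<phi> ((\<phi>^^n) t)"
    then have "(\<phi>^^n) s = (\<phi>^^n) t" by (rule inj_onD[OF inj _ w1(2) w2(2)])
    with IH(1) show False by contradiction
  qed
  have me: "m {\<phi> ((\<phi>^^n) s), \<phi> ((\<phi>^^n) t)} = m {(\<phi>^^n) s, (\<phi>^^n) t}"
    using phi_m w1(2) w2(2) IH(1) by blast
  have e1: "(\<phi>^^Suc n) s = \<phi> ((\<phi>^^n) s)" "(\<phi>^^Suc n) t = \<phi> ((\<phi>^^n) t)" by simp_all
  show ?case unfolding e1 using ne me IH(2) by simp
qed

lemma funpow_mult_fix: "(f^^L) x = x \<Longrightarrow> (f^^(q*L)) x = x"
proof (induction q)
  case 0 then show ?case by simp
next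
  case (Suc q)
  have "(f^^(Suc q * L)) x = (f^^L) ((f^^(q*L)) x)" by (simp add: funpow_add)
  then show ?case using Suc by simp
qed

lemma funpow_mod: "(f^^L) x = x \<Longrightarrow> (f^^n) x = (f^^(n mod L)) x"
proof -
  assume h: "(f^^L) x = x"
  have "n = n mod L + (n div L) * L" by simp
  then have "(f^^n) x = (f^^(n mod L)) ((f^^((n div L) * L)) x)"
    by (metis funpow_add comp_apply)
  then show ?thesis using funpow_mult_fix[OF h] by simp
qed

lemma fper_P: assumes "x \<in> S" "fper x" shows "P x"
proof -
  let ?Q = "\<lambda>d. d \<ge> 1 \<and> (\<phi>^^d) x = x \<and> walk \<phi> S' x d"
  define L where "L = (LEAST d. ?Q d)"
  have ex: "\<exists>d. ?Q d" using assms(2) unfolding fper_def by blast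
  have QL: "?Q L" unfolding L_def using ex by (rule LeastI_ex)
  have L1: "L \<ge> 1" and Lf: "(\<phi>^^L) x = x" and Lw: "walk \<phi> S' x L" using QL by blast+
  have nf: "(\<phi>^^j) x \<noteq> x" if j: "1 \<le> j" "j < L" for j
  proof
    assume "(\<phi>^^j) x = x"
    moreover have "walk \<phi> S' x j" using walk_mono[OF Lw] j(2) by simp
    ultimately have "?Q j" using j(1) by blast
    then have "L \<le> j" unfolding L_def by (rule Least_le)
    then show False using j(2) by simp
  qed
  have cyc: "cycle_len \<phi> S' x L"
    unfolding cycle_len_def using L1 Lw Lf nf by blast
  have "L dvd k" using k_cycles assms(1) cyc by blast
  then obtain q0 where "k = L * q0" by (rule dvdE)
  then have q: "k = q0 * L" by (simp add: mult.commute)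
  have fixk: "(\<phi>^^k) x = x" unfolding q by (rule funpow_mult_fix[OF Lf])
  have "walk \<phi> S' x N" for N
    unfolding walk_def
  proof (intro allI impI)
    fix i
    have e: "(\<phi>^^i) x = (\<phi>^^(i mod L)) x" by (rule funpow_mod[OF Lf])
    have "i mod L < L" using L1 by simp
    then have "(\<phi>^^(i mod L)) x \<in> S'" using Lw unfolding walk_def by blast
    then show "(\<phi>^^i) x \<in> S'" unfolding e .
  qed
  then show ?thesis using fixk by (simp add: P_def)
qed

lemma P_fper: "P x \<Longrightarrow> fper x"
  unfolding P_def fper_def using k_pos by blast

lemma P_mod: "P x \<Longrightarrow> (\<phi>^^n) x = (\<phi>^^(n mod k)) x"
  unfolding P_def using funpow_mod by metis

lemma P_shift: assumes "P x" shows "P ((\<phi>^^a) x)"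
proof -
  have "(\<phi>^^k) ((\<phi>^^a) x) = (\<phi>^^a) ((\<phi>^^k) x)"
    by (metis add.commute comp_apply funpow_add)
  moreover have "walk \<phi> S' ((\<phi>^^a) x) N" for N
    using assms walk_shift[of \<phi> S' x a N] by (simp add: P_def)
  ultimately show ?thesis using assms by (simp add: P_def)
qed

lemma in_S: assumes "x \<in> S" "walk \<phi> S' x n" "i \<le> n" shows "(\<phi>^^i) x \<in> S"
proof (cases i)
  case 0 then show ?thesis using assms by simp
next
  case (Suc i')
  then have "(\<phi>^^i') x \<in> S'" using assms by (auto simp: walk_def)
  then have "\<phi> ((\<phi>^^i') x) \<in> S''" using phi_bij by (auto simp: bij_betw_def)
  then show ?thesis using Suc S''_sub by auto
qed

lemma pigeon: assumes "x \<in> S" "walk \<phi> S' x N" "card S \<le> N" shows "fper x"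
proof -
  let ?f = "\<lambda>i. (\<phi>^^i) x"
  have sub: "?f ` {0..N} \<subseteq> S"
  proof
    fix z assume "z \<in> ?f ` {0..N}"
    then obtain i where i: "i \<le> N" "z = ?f i" by auto
    show "z \<in> S" unfolding i(2) by (rule in_S[OF assms(1,2) i(1)])
  qed
  have ninj: "\<not> inj_on ?f {0..N}"
  proof
    assume "inj_on ?f {0..N}"
    then have "card (?f ` {0..N}) = Suc N" by (simp add: card_image)
    moreover have "card (?f ` {0..N}) \<le> card S" using card_mono[OF finS sub] .
    ultimately show False using assms(3) by simp
  qed
  obtain p0 q0 where pq0: "p0 \<le> N" "q0 \<le> N" "?f p0 = ?f q0" "p0 \<noteq> q0"
    using ninj unfolding inj_on_def by auto
  obtain p q where pq: "p \<le> N" "q \<le> N" "p < q" "?f p = ?f q"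
  proof (cases "p0 < q0")
    case True then show ?thesis using that pq0 by blast
  next
    case False then have "q0 < p0" using pq0(4) by simp
    then show ?thesis using that[of q0 p0] pq0 by simp
  qed
  define d where "d = q - p"
  define y where "y = (\<phi>^^d) x"
  have w1: "walk \<phi> S' x p" using walk_mono[OF assms(2) pq(1)] .
  have "walk \<phi> S' x (d + p)" using walk_mono[OF assms(2)] pq unfolding d_def by simp
  then have w2: "walk \<phi> S' y p" unfolding y_def by (rule walk_shift)
  have "(\<phi>^^p) y = (\<phi>^^(p + d)) x" unfolding y_def by (simp add: funpow_add)
  also have "p + d = q" unfolding d_def using pq(3) by simp
  finally have "(\<phi>^^p) y = (\<phi>^^p) x" using pq(4) by simp
  then have yx: "y = x" using W[OF w2 w1] by blast
  have "d \<ge> 1" unfolding d_def using pq(3) by simp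
  moreover have "walk \<phi> S' x d" using walk_mono[OF assms(2)] pq unfolding d_def by simp
  ultimately show ?thesis unfolding fper_def using yx unfolding y_def by blast
qed

lemma Q: assumes x: "x \<in> S" and w: "walk \<phi> S' x n" and kn: "k \<le> 2*n" shows "P x"
proof (rule ccontr)
  assume nP: "\<not> P x"
  have PP: False if "y \<in> S" "fper y" "(\<phi>^^c) y = x" for y c
    using P_shift[OF fper_P[OF that(1,2)], of c] that(3) nP by simp
  define B where "B = {c. \<exists>y\<in>S. walk \<phi> S' y (c+n) \<and> (\<phi>^^c) y = x}"
  have Bsub: "B \<subseteq> {..card S}"
  proof
    fix c assume "c \<in> B"
    then obtain y where y: "y \<in> S" "walk \<phi> S' y (c+n)" "(\<phi>^^c) y = x" unfolding B_def by blast
    show "c \<in> {..card S}"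
    proof (rule ccontr)
      assume "c \<notin> {..card S}"
      then have "card S \<le> c + n" by simp
      then show False using PP[OF y(1) pigeon[OF y(1,2)] y(3)] by simp
    qed
  qed
  have "0 \<in> B" unfolding B_def using x w by auto
  have finB: "finite B" using Bsub finite_subset by blast
  define c where "c = Max B"
  have "c \<in> B" unfolding c_def using finB \<open>0 \<in> B\<close> Max_in by blast
  then obtain y where y: "y \<in> S" "walk \<phi> S' y (c+n)" "(\<phi>^^c) y = x" unfolding B_def by blast
  have ynot: "y \<notin> S''"
  proof
    assume "y \<in> S''"
    then obtain z where z: "z \<in> S'" "\<phi> z = y" using phi_bij by (auto simp: bij_betw_def)
    have "walk \<phi> S' z (Suc c + n)"
      unfolding walk_def
    proof (intro allI impI)
      fix i assume "i < Suc c + n"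
      then show "(\<phi>^^i) z \<in> S'"
        using z y(2) by (cases i) (auto simp: walk_def funpow_Suc_right simp del: funpow.simps)
    qed
    moreover have "(\<phi>^^Suc c) z = x" using z y(3) by (simp add: funpow_Suc_right del: funpow.simps)
    ultimately have "Suc c \<in> B" unfolding B_def using z S'_sub by auto
    then have "Suc c \<le> c" unfolding c_def using finB Max_ge by blast
    then show False by simp
  qed
  have ex: "\<exists>j. (\<phi>^^j) y \<notin> S'"
  proof (rule ccontr)
    assume "\<not> ?thesis"
    then have "walk \<phi> S' y (card S)" by (auto simp: walk_def)
    then show False using PP[OF y(1) pigeon[OF y(1) _ order.refl] y(3)] by simp
  qed
  define n0 where "n0 = (LEAST j. (\<phi>^^j) y \<notin> S')"
  have n0a: "(\<phi>^^n0) y \<notin> S'" unfolding n0_def using ex by (rule LeastI_ex)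
  have n0b: "walk \<phi> S' y n0" unfolding walk_def n0_def using not_less_Least by blast
  have "path_len \<phi> S' S'' y n0" unfolding path_len_def using ynot n0a n0b by simp
  then have "2 * n0 < k" using k_paths y(1) by blast
  moreover have "c + n \<le> n0"
  proof (rule ccontr)
    assume "\<not> c + n \<le> n0"
    then have "n0 < c + n" by simp
    then have "(\<phi>^^n0) y \<in> S'" using y(2) unfolding walk_def by blast
    then show False using n0a by simp
  qed
  ultimately show False using kn by linarith
qed


lemma modeq: "((i::nat)+a) mod k = (i+b) mod k \<Longrightarrow> a mod k = b mod k"
proof -
  assume h: "((i::nat)+a) mod k = (i+b) mod k"
  show ?thesis
  proof (cases "a \<le> b")
    case True
    have "k dvd (i+b) - (i+a)" using iffD1[OF mod_eq_dvd_iff_nat[where m="i+b" and n="i+a" and q=k]] h[symmetric] True by simp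
    then have "k dvd b - a" by simp
    then have "b mod k = a mod k" using iffD2[OF mod_eq_dvd_iff_nat[where m=b and n=a and q=k]] True by blast
    then show ?thesis by simp
  next
    case False
    have "k dvd (i+a) - (i+b)" using iffD1[OF mod_eq_dvd_iff_nat[where m="i+a" and n="i+b" and q=k]] h False by simp
    then have "k dvd a - b" by simp
    then show "a mod k = b mod k" using iffD2[OF mod_eq_dvd_iff_nat[where m=a and n=b and q=k]] False by simp
  qed
qed

lemma mixmod: assumes "(i::nat) < k" "j = (i+a) mod k" "i = (j+b) mod k" shows "(a+b) mod k = 0"
proof -
  have "i = (i + (a+b)) mod k" using assms(3) unfolding assms(2) by (simp only: mod_add_left_eq add.assoc)
  then have "(i + (a+b)) mod k = i" by (rule sym)
  then have "(i + (a+b)) mod k = (i + 0) mod k" using assms(1) by simp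
  from modeq[OF this] show ?thesis by simp
qed

lemma modlt: "(a::nat) mod k = b mod k \<Longrightarrow> a < b \<Longrightarrow> k \<le> b"
proof (rule ccontr)
  assume h: "a mod k = b mod k" "a < b" "\<not> k \<le> b"
  then have "b mod k = b" "a mod k = a" by auto
  then show False using h by simp
qed

lemma modz: "(c::nat) mod k = 0 \<Longrightarrow> c \<noteq> 0 \<Longrightarrow> k \<le> c"
  using mod_less[of c k] by (cases "c < k") auto

lemma fwd:
  assumes "walk \<phi> S' s c" "walk \<phi> S' t c" "s' = (\<phi>^^c) s" "t' = (\<phi>^^c) t" "s \<noteq> t"
  shows "s' \<noteq> t' \<and> m {s,t} = m {s',t'}"
  using W[OF assms(1,2,5)] assms(3,4) by simp

lemma bwd:
  assumes "walk \<phi> S' s' c" "walk \<phi> S' t' c" "s = (\<phi>^^c) s'" "t = (\<phi>^^c) t'" "s \<noteq> t"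
  shows "s' \<noteq> t' \<and> m {s,t} = m {s',t'}"
proof -
  have "s' \<noteq> t'" using assms by auto
  then show ?thesis using W[OF assms(1,2)] assms(3,4) by simp
qed

lemma comb: "(\<phi>^^b) ((\<phi>^^a) x) = (\<phi>^^(a+b)) x"
  by (metis add.commute comp_apply funpow_add)

lemma coreFF:
  assumes S: "s\<in>S" "t\<in>S" "s'\<in>S" "t'\<in>S" and st: "s\<noteq>t" and ij: "i<k" "j<k"
   and h1: "walk \<phi> S' s a \<and> s' = (\<phi>^^a) s \<and> j = (i+a) mod k" and h2: "walk \<phi> S' t b \<and> t' = (\<phi>^^b) t \<and> j = (i+b) mod k"
  shows "s' \<noteq> t' \<and> m {s,t} = m {s',t'}"
proof -
  note FF = conjunct1[OF h1] conjunct1[OF conjunct2[OF h1]] conjunct2[OF conjunct2[OF h1]] conjunct1[OF h2] conjunct1[OF conjunct2[OF h2]] conjunct2[OF conjunct2[OF h2]]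
  have am: "a mod k = b mod k" using modeq[where i=i and a=a and b=b ] FF(3,6) by simp
  consider "a = b" | "a < b" | "b < a" by linarith
  then show ?thesis
  proof cases
    case 1 then show ?thesis using fwd[OF FF(1) _ FF(2) _ st] FF(4,5) 1 by simp
  next
    case 2
    then have "k \<le> b" using modlt[of a b] am 2 by simp
    then have Pt: "P t" using Q[OF S(2) FF(4)] by simp
    have "t' = (\<phi>^^a) t" using FF(5) P_mod[OF Pt, of b] P_mod[OF Pt, of a] am by simp
    moreover have "walk \<phi> S' t a" using FF(4) 2 walk_mono by fastforce
    ultimately show ?thesis using fwd[OF FF(1) _ FF(2) _ st] by blast
  next
    case 3
    then have "k \<le> a" using modlt[of b a] am 3 by simp
    then have Ps: "P s" using Q[OF S(1) FF(1)] by simp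
    have "s' = (\<phi>^^b) s" using FF(2) P_mod[OF Ps, of b] P_mod[OF Ps, of a] am by simp
    moreover have "walk \<phi> S' s b" using FF(1) 3 walk_mono by fastforce
    ultimately show ?thesis using fwd[OF _ FF(4) _ FF(5) st] by blast
  qed
qed

lemma coreBB:
  assumes S: "s\<in>S" "t\<in>S" "s'\<in>S" "t'\<in>S" and st: "s\<noteq>t" and ij: "i<k" "j<k"
   and h1: "walk \<phi> S' s' a \<and> s = (\<phi>^^a) s' \<and> i = (j+a) mod k" and h2: "walk \<phi> S' t' b \<and> t = (\<phi>^^b) t' \<and> i = (j+b) mod k"
  shows "s' \<noteq> t' \<and> m {s,t} = m {s',t'}"
proof -
  note BB = conjunct1[OF h1] conjunct1[OF conjunct2[OF h1]] conjunct2[OF conjunct2[OF h1]] conjunct1[OF h2] conjunct1[OF conjunct2[OF h2]] conjunct2[OF conjunct2[OF h2]]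
  have am: "a mod k = b mod k" using modeq[where i=j and a=a and b=b ] BB(3,6) by simp
  consider "a = b" | "a < b" | "b < a" by linarith
  then show ?thesis
  proof cases
    case 1 then show ?thesis using bwd[OF BB(1) _ BB(2) _ st] BB(4,5) 1 by simp
  next
    case 2
    then have "k \<le> b" using modlt[of a b] am 2 by simp
    then have Pt: "P t'" using Q[OF S(4) BB(4)] by simp
    have "t = (\<phi>^^a) t'" using BB(5) P_mod[OF Pt, of b] P_mod[OF Pt, of a] am by simp
    moreover have "walk \<phi> S' t' a" using BB(4) 2 walk_mono by fastforce
    ultimately show ?thesis using bwd[OF BB(1) _ BB(2) _ st] by blast
  next
    case 3
    then have "k \<le> a" using modlt[of b a] am 3 by simp
    then have Ps: "P s'" using Q[OF S(3) BB(1)] by simp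
    have "s = (\<phi>^^b) s'" using BB(2) P_mod[OF Ps, of b] P_mod[OF Ps, of a] am by simp
    moreover have "walk \<phi> S' s' b" using BB(1) 3 walk_mono by fastforce
    ultimately show ?thesis using bwd[OF _ BB(4) _ BB(5) st] by blast
  qed
qed

lemma coreFB:
  assumes S: "s\<in>S" "t\<in>S" "s'\<in>S" "t'\<in>S" and st: "s\<noteq>t" and ij: "i<k" "j<k"
   and h1: "walk \<phi> S' s a \<and> s' = (\<phi>^^a) s \<and> j = (i+a) mod k" and h2: "walk \<phi> S' t' b \<and> t = (\<phi>^^b) t' \<and> i = (j+b) mod k"
  shows "s' \<noteq> t' \<and> m {s,t} = m {s',t'}"
proof -
  note FB = conjunct1[OF h1] conjunct1[OF conjunct2[OF h1]] conjunct2[OF conjunct2[OF h1]] conjunct1[OF h2] conjunct1[OF conjunct2[OF h2]] conjunct2[OF conjunct2[OF h2]]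
  have z: "(a+b) mod k = 0" using mixmod[OF ij(1) FB(3) FB(6)] .
  show ?thesis
  proof (cases "a + b = 0")
    case True
    then have "a = 0" "b = 0" by auto
    then have "s' = s" "t = t'" using FB(2) FB(5) by auto
    then show ?thesis using st by simp
  next
    case False
    then have "k \<le> a + b" using modz[OF z] by simp
    then consider "k \<le> 2*a" | "k \<le> 2*b" by linarith
    then show ?thesis
    proof cases
      case 1
      then have Ps: "P s" using Q[OF S(1) FB(1)] by simp
      then have Ps': "P s'" using P_shift FB(2) by simp
      have e: "s = (\<phi>^^b) s'" using FB(2) comb[of b a s] P_mod[OF Ps, of "a+b"] z by simp
      have w: "walk \<phi> S' s' b" using Ps' by (simp add: P_def)
      show ?thesis using bwd[OF w FB(4) e FB(5) st] .
    next
      case 2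
      then have Pt: "P t'" using Q[OF S(4) FB(4)] by simp
      then have Pt': "P t" using P_shift FB(5) by simp
      have e: "t' = (\<phi>^^a) t" using FB(5) comb[of a b t'] P_mod[OF Pt, of "b+a"] z by (simp add: add.commute)
      have w: "walk \<phi> S' t a" using Pt' by (simp add: P_def)
      show ?thesis using fwd[OF FB(1) w FB(2) e st] .
    qed
  qed
qed

lemma coreBF:
  assumes S: "s\<in>S" "t\<in>S" "s'\<in>S" "t'\<in>S" and st: "s\<noteq>t" and ij: "i<k" "j<k"
   and h1: "walk \<phi> S' s' a \<and> s = (\<phi>^^a) s' \<and> i = (j+a) mod k" and h2: "walk \<phi> S' t b \<and> t' = (\<phi>^^b) t \<and> j = (i+b) mod k"
  shows "s' \<noteq> t' \<and> m {s,t} = m {s',t'}"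
proof -
  note BF = conjunct1[OF h1] conjunct1[OF conjunct2[OF h1]] conjunct2[OF conjunct2[OF h1]] conjunct1[OF h2] conjunct1[OF conjunct2[OF h2]] conjunct2[OF conjunct2[OF h2]]
  have z: "(a+b) mod k = 0" using mixmod[OF ij(2) BF(3) BF(6)] .
  have z': "(b+a) mod k = 0" using z by (simp add: add.commute)
  show ?thesis
  proof (cases "a + b = 0")
    case True
    then have "a = 0" "b = 0" by auto
    then have "s' = s" "t = t'" using BF(2) BF(5) by auto
    then show ?thesis using st by simp
  next
    case False
    then have "k \<le> a + b" using modz[OF z] by simp
    then consider "k \<le> 2*a" | "k \<le> 2*b" by linarith
    then show ?thesis
    proof cases
      case 1
      then have Ps: "P s'" using Q[OF S(3) BF(1)] by simp
      then have Ps': "P s" using P_shift BF(2) by simp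
      have e: "s' = (\<phi>^^b) s" using BF(2) comb[of b a s'] P_mod[OF Ps, of "a+b"] z by simp
      have w: "walk \<phi> S' s b" using Ps' by (simp add: P_def)
      show ?thesis using fwd[OF w BF(4) e BF(5) st] .
    next
      case 2
      then have Pt: "P t" using Q[OF S(2) BF(4)] by simp
      then have Pt': "P t'" using P_shift BF(5) by simp
      have e: "t = (\<phi>^^a) t'" using BF(5) comb[of a b t] P_mod[OF Pt, of "b+a"] z' by simp
      have w: "walk \<phi> S' t' a" using Pt' by (simp add: P_def)
      show ?thesis using bwd[OF BF(1) w BF(2) e st] .
    qed
  qed
qed

lemma core:
  assumes S: "s\<in>S" "t\<in>S" "s'\<in>S" "t'\<in>S" and st: "s\<noteq>t" and ij: "i<k" "j<k"
   and hs: "(walk \<phi> S' s a \<and> s' = (\<phi>^^a) s \<and> j = (i+a) mod k) \<or> (walk \<phi> S' s' a \<and> s = (\<phi>^^a) s' \<and> i = (j+a) mod k)"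
   and ht: "(walk \<phi> S' t b \<and> t' = (\<phi>^^b) t \<and> j = (i+b) mod k) \<or> (walk \<phi> S' t' b \<and> t = (\<phi>^^b) t' \<and> i = (j+b) mod k)"
  shows "s' \<noteq> t' \<and> m {s,t} = m {s',t'}"
proof (cases "walk \<phi> S' s a \<and> s' = (\<phi>^^a) s \<and> j = (i+a) mod k")
  case T1: True
  show ?thesis
  proof (cases "walk \<phi> S' t b \<and> t' = (\<phi>^^b) t \<and> j = (i+b) mod k")
    case True show ?thesis by (rule coreFF[OF S st ij T1 True])
  next
    case False then have "walk \<phi> S' t' b \<and> t = (\<phi>^^b) t' \<and> i = (j+b) mod k" using ht by blast
    then show ?thesis by (rule coreFB[OF S st ij T1])
  qed
next
  case F1: False
  then have B1: "walk \<phi> S' s' a \<and> s = (\<phi>^^a) s' \<and> i = (j+a) mod k" using hs by blast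
  show ?thesis
  proof (cases "walk \<phi> S' t b \<and> t' = (\<phi>^^b) t \<and> j = (i+b) mod k")
    case True show ?thesis by (rule coreBF[OF S st ij B1 True])
  next
    case False then have "walk \<phi> S' t' b \<and> t = (\<phi>^^b) t' \<and> i = (j+b) mod k" using ht by blast
    then show ?thesis by (rule coreBB[OF S st ij B1])
  qed
qed

lemma part1:
  assumes ij: "i<k" "j<k" and S: "s\<in>S" "t\<in>S" "s'\<in>S" "t'\<in>S" and st: "s\<noteq>t"
    and e1: "psi k \<phi> S' i s = psi k \<phi> S' j s'" and e2: "psi k \<phi> S' i t = psi k \<phi> S' j t'"
  shows "s'\<noteq>t' \<and> m{s,t} = m{s',t'}"
proof -
  have refl: "(j,u) \<in> psi k \<phi> S' j u" for u by (simp add: psi_def eqv_def)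
  have "(j,s') \<in> psi k \<phi> S' i s" using refl[of s'] e1 by simp
  then have r1: "((i,s),(j,s')) \<in> eqv k \<phi> S'" by (simp add: psi_def)
  have "(j,t') \<in> psi k \<phi> S' i t" using refl[of t'] e2 by simp
  then have r2: "((i,t),(j,t')) \<in> eqv k \<phi> S'" by (simp add: psi_def)
  obtain a where hs: "(walk \<phi> S' s a \<and> s' = (\<phi>^^a) s \<and> j = (i+a) mod k) \<or> (walk \<phi> S' s' a \<and> s = (\<phi>^^a) s' \<and> i = (j+a) mod k)"
    using eqv_char[OF inj r1 ij] by blast
  obtain b where ht: "(walk \<phi> S' t b \<and> t' = (\<phi>^^b) t \<and> j = (i+b) mod k) \<or> (walk \<phi> S' t' b \<and> t = (\<phi>^^b) t' \<and> i = (j+b) mod k)"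
    using eqv_char[OF inj r2 ij] by blast
  show ?thesis using core[OF S st ij hs ht] .
qed

end

theorem lemma4:
  fixes S S' S'' :: "'a set" and m :: "'a set \<Rightarrow> enat" and \<phi> :: "'a \<Rightarrow> 'a" and k :: nat
  assumes finS: "finite S"
    and m_range: "\<forall>s\<in>S. \<forall>t\<in>S. s \<noteq> t \<longrightarrow> m {s, t} \<ge> 2"
    and S'_sub: "S' \<subseteq> S" and S''_sub: "S'' \<subseteq> S"
    and phi_bij: "bij_betw \<phi> S' S''"
    and phi_m: "\<forall>s\<in>S'. \<forall>t\<in>S'. s \<noteq> t \<longrightarrow> m {\<phi> s, \<phi> t} = m {s, t}"
    and k_pos: "k \<ge> 1"
    and k_cycles: "\<forall>s\<in>S. \<forall>n. cycle_len \<phi> S' s n \<longrightarrow> n dvd k"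
    and k_paths: "\<forall>s\<in>S. \<forall>n. path_len \<phi> S' S'' s n \<longrightarrow> 2 * n < k"
  shows "(\<forall>i<k. \<forall>j<k. \<forall>s\<in>S. \<forall>t\<in>S. \<forall>s'\<in>S. \<forall>t'\<in>S.
            s \<noteq> t \<and> psi k \<phi> S' i s = psi k \<phi> S' j s' \<and> psi k \<phi> S' i t = psi k \<phi> S' j t'
            \<longrightarrow> s' \<noteq> t' \<and> m {s, t} = m {s', t'})
       \<and> (\<exists>mbar :: (nat \<times> 'a) set set \<Rightarrow> enat.
            \<forall>x\<in>Sbar k \<phi> S S'. \<forall>y\<in>Sbar k \<phi> S S'. x \<noteq> y \<longrightarrow>
              (\<forall>i<k. \<forall>s\<in>S. \<forall>t\<in>S. x = psi k \<phi> S' i s \<and> y = psi k \<phi> S' i t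
                  \<longrightarrow> mbar {x, y} = m {s, t})
            \<and> ((\<not> (\<exists>i<k. \<exists>s\<in>S. \<exists>t\<in>S. x = psi k \<phi> S' i s \<and> y = psi k \<phi> S' i t))
                  \<longrightarrow> mbar {x, y} = \<infinity>))"
proof -
  interpret L: lsetup S S' S'' m \<phi> k
    using finS S'_sub S''_sub phi_bij phi_m k_pos k_cycles k_paths by unfold_locales auto
  let ?psi = "psi k \<phi> S'"
  have P1: "\<forall>i<k. \<forall>j<k. \<forall>s\<in>S. \<forall>t\<in>S. \<forall>s'\<in>S. \<forall>t'\<in>S.
            s \<noteq> t \<and> ?psi i s = ?psi j s' \<and> ?psi i t = ?psi j t'
            \<longrightarrow> s' \<noteq> t' \<and> m {s, t} = m {s', t'}"
    by (intro allI impI ballI, elim conjE, rule L.part1) auto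
  define Cnd where "Cnd X p \<longleftrightarrow> (case p of (i,s,t) \<Rightarrow> i<k \<and> s\<in>S \<and> t\<in>S \<and> X = {?psi i s, ?psi i t} \<and> ?psi i s \<noteq> ?psi i t)" for X p
  define mbar where "mbar X = (if \<exists>p. Cnd X p then (case SOME p. Cnd X p of (i,s,t) \<Rightarrow> m {s,t}) else \<infinity>)" for X
  have A: "mbar {x,y} = m {s,t}" if xy: "x \<noteq> y" and i: "i<k" "s\<in>S" "t\<in>S" "x = ?psi i s" "y = ?psi i t" for x y i s t
  proof -
    have c: "Cnd {x,y} (i,s,t)" using xy i by (simp add: Cnd_def)
    then have ex: "\<exists>p. Cnd {x,y} p" by blast
    obtain i' s' t' where p: "(SOME p. Cnd {x,y} p) = (i',s',t')" by (metis prod_cases3)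
    have c': "Cnd {x,y} (i',s',t')" using someI[of "Cnd {x,y}", OF c] p by simp
    then have i': "i'<k" "s'\<in>S" "t'\<in>S" "{x,y} = {?psi i' s', ?psi i' t'}" by (auto simp: Cnd_def)
    have mb: "mbar {x,y} = m {s',t'}" using ex p by (simp add: mbar_def)
    have st: "s \<noteq> t" using xy i by auto
    from i'(4) consider "x = ?psi i' s'" "y = ?psi i' t'" | "x = ?psi i' t'" "y = ?psi i' s'"
      by (auto simp: doubleton_eq_iff)
    then show ?thesis
    proof cases
      case 1
      then have "m {s,t} = m {s',t'}" using L.part1[OF i(1) i'(1) i(2) i(3) i'(2) i'(3) st] i by simp
      then show ?thesis using mb by simp
    next
      case 2
      then have "m {s,t} = m {t',s'}" using L.part1[OF i(1) i'(1) i(2) i(3) i'(3) i'(2) st] i by simp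
      then show ?thesis using mb by (simp add: insert_commute)
    qed
  qed
  have B: "mbar {x,y} = \<infinity>" if n: "\<not> (\<exists>i<k. \<exists>s\<in>S. \<exists>t\<in>S. x = ?psi i s \<and> y = ?psi i t)" for x y
  proof -
    have "\<not> (\<exists>p. Cnd {x,y} p)"
    proof
      assume "\<exists>p. Cnd {x,y} p"
      then obtain i s t where c: "Cnd {x,y} (i,s,t)" by (metis prod_cases3)
      then have "i<k" "s\<in>S" "t\<in>S" "{x,y} = {?psi i s, ?psi i t}" by (auto simp: Cnd_def)
      then show False using n by (auto simp: doubleton_eq_iff)
    qed
    then show ?thesis by (simp add: mbar_def)
  qed
  show ?thesis
    apply (intro conjI)
    subgoal using P1 by blast
    apply (rule exI[of _ mbar])
    apply (intro ballI impI conjI allI)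
    subgoal using A by blast
    subgoal using B by blast
    done
qed

end
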